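(* Let $\vec a=(a_1,\dots,a_n),\vec b=(b_1,\dots,b_n)\in\mathbb{R}^n$ and $\delta\ge0$ with $\|\mathrm{push}_{\mathcal L_{\vec b}}(\vec a)-\vec b\|_\infty\le\delta$. Then $\min_{i\in[n]}|a_i-b_i|\le\delta$. In particular, if $\vec a\in\mathrm{Im}\,\mathcal G$ for a grid $\mathcal G$, then $\inf_{\vec g\in\mathrm{Grid}_{\mathcal G}}\|\vec b-\vec g\|_\infty\le\delta$.
   Context: $\mathcal L_{\vec b}$ is the line $\{\vec b+t\vec1:t\in\mathbb{R}\}$, $\vec1=(1,\dots,1)$. $\mathrm{push}_{\mathcal L}(\vec p)=\min\{\vec q\in\mathcal L:\vec q\ge\vec p\}$ in the coordinatewise order. A grid is $\mathcal G=\prod_i\mathcal G^i:\prod_i[k_i]\to\mathbb{R}^n$ with $\mathcal G^i:[k_i]\to\mathbb{R}$, and $\mathrm{Grid}_{\mathcal G}=\{\vec x\in\mathbb{R}^n:x_j\in\mathrm{Im}\,\mathcal G^j\text{ for some }j\}$. *)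

theory Defs
  imports "HOL-Analysis.Analysis"
begin

definition diag_line :: "real^'n \<Rightarrow> (real^'n) set" where
  "diag_line b = {b + t *\<^sub>R (\<chi> i. 1) | t. True}"

definition push :: "(real^'n) set \<Rightarrow> real^'n \<Rightarrow> real^'n" where
  "push L p = (LEAST q. q \<in> L \<and> p \<le> q)"

definition linf_norm :: "real^'n \<Rightarrow> real" where
  "linf_norm x = Max (range (\<lambda>i. \<bar>x $ i\<bar>))"

text \<open>A grid G = prod_i G^i with G^i : [k_i] -> R, [k] = {1..k}.
  Im G is the set of grid points, Grid_G the union of the grid hyperplanes.\<close>
definition grid_image :: "('n \<Rightarrow> nat) \<Rightarrow> ('n \<Rightarrow> nat \<Rightarrow> real) \<Rightarrow> (real^'n) set" where
  "grid_image k G = {x. \<forall>i. x $ i \<in> G i ` {1..k i}}"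

definition Grid :: "('n \<Rightarrow> nat) \<Rightarrow> ('n \<Rightarrow> nat \<Rightarrow> real) \<Rightarrow> (real^'n) set" where
  "Grid k G = {x. \<exists>j. x $ j \<in> G j ` {1..k j}}"

end

theory Submission
  imports Defs
begin

theorem mainTheorem14:
  fixes a b :: "real^'n" and \<delta> :: real
  assumes "\<delta> \<ge> 0"
    and "linf_norm (push (diag_line b) a - b) \<le> \<delta>"
  shows "Min (range (\<lambda>i. \<bar>a $ i - b $ i\<bar>)) \<le> \<delta>
    \<and> (\<forall>(k :: 'n \<Rightarrow> nat) (G :: 'n \<Rightarrow> nat \<Rightarrow> real). a \<in> grid_image k G \<longrightarrow>
          (INF g\<in>Grid k G. linf_norm (b - g)) \<le> \<delta>)"
proof -
  define t where "t = Max (range (\<lambda>i. a$i - b$i))"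
  have fin: "finite (range (\<lambda>i::'n. a$i - b$i))" by simp
  obtain i0 where i0: "t = a$i0 - b$i0"
  proof -
    have "t \<in> range (\<lambda>i. a$i - b$i)" unfolding t_def by (rule Max_in[OF fin]) simp
    thus ?thesis using that by blast
  qed
  have tge: "\<And>i. a$i - b$i \<le> t" unfolding t_def using fin by (intro Max_ge) auto
  have push: "push (diag_line b) a = b + t *\<^sub>R (\<chi> i. 1)"
    unfolding push_def
  proof (rule Least_equality)
    show "b + t *\<^sub>R (\<chi> i. 1) \<in> diag_line b \<and> a \<le> b + t *\<^sub>R (\<chi> i. 1)"
      unfolding diag_line_def less_eq_vec_def using tge by (auto simp: algebra_simps)
  next
    fix y assume y: "y \<in> diag_line b \<and> a \<le> y"
    then obtain s where s: "y = b + s *\<^sub>R (\<chi> i. 1)" unfolding diag_line_def by auto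
    with y have "a$i0 \<le> b$i0 + s" by (auto simp: less_eq_vec_def)
    hence "t \<le> s" using i0 by simp
    thus "b + t *\<^sub>R (\<chi> i. 1) \<le> y" unfolding s less_eq_vec_def by simp
  qed
  have "linf_norm (push (diag_line b) a - b) = \<bar>t\<bar>"
    unfolding push linf_norm_def by simp
  with assms have td: "\<bar>a$i0 - b$i0\<bar> \<le> \<delta>" using i0 by simp
  have part1: "Min (range (\<lambda>i. \<bar>a $ i - b $ i\<bar>)) \<le> \<delta>"
    by (rule order_trans[OF Min_le td]) auto
  have part2: "(INF g\<in>Grid k G. linf_norm (b - g)) \<le> \<delta>" if ag: "a \<in> grid_image k G" for k G
  proof -
    define g where "g = (\<chi> i. if i = i0 then a$i0 else b$i)"
    have gG: "g \<in> Grid k G" using ag unfolding Grid_def grid_image_def g_def by auto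
    have "linf_norm (b - g) = Max (range (\<lambda>i. \<bar>(b - g)$i\<bar>))" by (simp add: linf_norm_def)
    also have "\<dots> \<le> \<delta>"
    proof (rule Max.boundedI)
      show "finite (range (\<lambda>i. \<bar>(b - g)$i\<bar>))" by simp
      show "range (\<lambda>i. \<bar>(b - g)$i\<bar>) \<noteq> {}" by simp
      fix x assume "x \<in> range (\<lambda>i. \<bar>(b - g)$i\<bar>)"
      then obtain i where "x = \<bar>(b - g)$i\<bar>" by auto
      thus "x \<le> \<delta>" using td assms(1) by (auto simp: g_def)
    qed
    finally have le: "linf_norm (b - g) \<le> \<delta>" .
    have bdd: "bdd_below ((\<lambda>g. linf_norm (b - g)) ` Grid k G)"
    proof (rule bdd_belowI[where m=0])
      fix x assume "x \<in> (\<lambda>g. linf_norm (b - g)) ` Grid k G"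
      then obtain h where "x = linf_norm (b - h)" by auto
      moreover have "\<bar>(b-h)$i0\<bar> \<le> Max (range (\<lambda>i. \<bar>(b - h)$i\<bar>))" by (rule Max_ge) auto
      ultimately show "0 \<le> x" unfolding linf_norm_def by linarith
    qed
    show ?thesis by (rule order_trans[OF cINF_lower[OF bdd gG] le])
  qed
  show ?thesis using part1 part2 by blast
qed

end
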